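(* Given a dynamic search tree $\overline{\mathcal{T}}_S$ (with $\Theta(\beta)$ elements per leaf) with an implementation of $\mathsf{Insert}$ taking $T_{\mathsf{Insert}}$ time, the $\mathsf{InsertIbltTree}$ operation takes $O(T_{\mathsf{Insert}}+\Delta_L\beta+\Delta_I c\delta)$ time, where $\Delta_L$ and $\Delta_I$ are the numbers of leaf and internal nodes whose sets of blocks change due to the insertion, and $c$ is the number of children per internal node.
   Context: An IBLT (Invertible Bloom Lookup Table) here has $O(\delta)$ cells holding XOR-sums of keys, values and tags of the triples hashed to them; inserting a triple costs $O(1)$ and combining two IBLTs (cellwise XOR) costs $O(\delta)$. The IBLT tree over a dynamic search tree $\overline{\mathcal{T}}_S$ on a set $S$ of key-value-tag triples with $\Theta(\beta)$ triples per leaf stores at every node an IBLT of the triples in its subtree (leaf IBLTs built from their triples; internal IBLTs as the combination of the children's IBLTs plus the node's own triple). $\mathsf{InsertIbltTree}(k,v,t)$ performs $\mathsf{Insert}$ on $\overline{\mathcal{T}}_S$, tracks the nodes whose subtree contents change, and recomputes each such node's IBLT (leaves from their triples, internal nodes by combining their children's IBLTs). *)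

theory Defs
  imports Main "HOL-Library.Multiset"
begin

text \<open>The XOR-sum is modelled by the addition of
  an abelian group (for bit strings this is XOR).  An IBLT with \<delta> cells is a list
  of \<delta> cells, each holding the sums of keys, values and tags hashed to it.
  Every operation returns its result together with its cost:
  inserting a triple costs 1 (O(1)), combining two IBLTs costs \<delta> (cellwise),
  creating an empty IBLT costs 1.\<close>

type_synonym ('k,'v,'t) triple = "'k \<times> 'v \<times> 't"
type_synonym ('k,'v,'t) iblt = "('k \<times> 'v \<times> 't) list"

definition add3 :: "('k::ab_group_add,'v::ab_group_add,'t::ab_group_add) triple \<Rightarrow> ('k,'v,'t) triple \<Rightarrow> ('k,'v,'t) triple" where
  "add3 a b = (fst a + fst b, fst (snd a) + fst (snd b), snd (snd a) + snd (snd b))"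

definition iblt_empty :: "nat \<Rightarrow> ('k::ab_group_add,'v::ab_group_add,'t::ab_group_add) iblt \<times> nat" where
  "iblt_empty \<delta> = (replicate \<delta> (0,0,0), 1)"

definition iblt_insert :: "('k \<Rightarrow> nat list) \<Rightarrow> ('k::ab_group_add,'v::ab_group_add,'t::ab_group_add) triple
    \<Rightarrow> ('k,'v,'t) iblt \<Rightarrow> ('k,'v,'t) iblt \<times> nat" where
  "iblt_insert h x B =
     (fold (\<lambda>i C. C[i mod length C := add3 (C ! (i mod length C)) x]) (h (fst x)) B, 1)"

definition iblt_combine :: "('k::ab_group_add,'v::ab_group_add,'t::ab_group_add) iblt \<Rightarrow> ('k,'v,'t) iblt \<Rightarrow> ('k,'v,'t) iblt \<times> nat" where
  "iblt_combine A B = (map2 add3 A B, length A)"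

fun iblt_inserts :: "('k \<Rightarrow> nat list) \<Rightarrow> ('k::ab_group_add,'v::ab_group_add,'t::ab_group_add) triple list
    \<Rightarrow> ('k,'v,'t) iblt \<times> nat \<Rightarrow> ('k,'v,'t) iblt \<times> nat" where
  "iblt_inserts h [] Bc = Bc"
| "iblt_inserts h (x # xs) (B, c) = (let (B', c') = iblt_insert h x B in iblt_inserts h xs (B', c + c'))"

definition iblt_build :: "('k \<Rightarrow> nat list) \<Rightarrow> nat \<Rightarrow> ('k::ab_group_add,'v::ab_group_add,'t::ab_group_add) triple list
    \<Rightarrow> ('k,'v,'t) iblt \<times> nat" where
  "iblt_build h \<delta> xs = iblt_inserts h xs (iblt_empty \<delta>)"

fun iblt_combines :: "('k::ab_group_add,'v::ab_group_add,'t::ab_group_add) iblt list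
    \<Rightarrow> ('k,'v,'t) iblt \<times> nat \<Rightarrow> ('k,'v,'t) iblt \<times> nat" where
  "iblt_combines [] Bc = Bc"
| "iblt_combines (A # As) (B, c) = (let (B', c') = iblt_combine B A in iblt_combines As (B', c + c'))"

text \<open>A node carries an identity 'n (so that nodes of the tree before and after an
  insertion can be related), leaves hold a list of triples, internal nodes hold
  their children, their own triple, and every node stores an IBLT annotation.\<close>

datatype ('n,'e,'i) itree =
    Leaf 'n "'e list" 'i
  | Node 'n "('n,'e,'i) itree list" 'e 'i

fun node_id :: "('n,'e,'i) itree \<Rightarrow> 'n" where
  "node_id (Leaf n _ _) = n"
| "node_id (Node n _ _ _) = n"

fun annot :: "('n,'e,'i) itree \<Rightarrow> 'i" where
  "annot (Leaf _ _ I) = I"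
| "annot (Node _ _ _ I) = I"

fun is_leaf :: "('n,'e,'i) itree \<Rightarrow> bool" where
  "is_leaf (Leaf _ _ _) = True"
| "is_leaf (Node _ _ _ _) = False"

fun contents :: "('n,'e,'i) itree \<Rightarrow> 'e multiset" where
  "contents (Leaf _ es _) = mset es"
| "contents (Node _ cs e _) = add_mset e (sum_list (map contents cs))"

fun nodes :: "('n,'e,'i) itree \<Rightarrow> ('n,'e,'i) itree list" where
  "nodes (Leaf n es I) = [Leaf n es I]"
| "nodes (Node n cs e I) = Node n cs e I # concat (map nodes cs)"

definition changed :: "('n,'e,'i) itree \<Rightarrow> ('n,'e,'i) itree \<Rightarrow> bool" where
  "changed old s \<longleftrightarrow> \<not> (\<exists>u \<in> set (nodes old). node_id u = node_id s \<and> contents u = contents s)"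

definition delta_L :: "('n,'e,'i) itree \<Rightarrow> ('n,'e,'i) itree \<Rightarrow> nat" where
  "delta_L old new = length (filter (\<lambda>s. is_leaf s \<and> changed old s) (nodes new))"

definition delta_I :: "('n,'e,'i) itree \<Rightarrow> ('n,'e,'i) itree \<Rightarrow> nat" where
  "delta_I old new = length (filter (\<lambda>s. \<not> is_leaf s \<and> changed old s) (nodes new))"

fun recompute :: "('k \<Rightarrow> nat list) \<Rightarrow> nat \<Rightarrow> ('n, ('k,'v,'t) triple, ('k,'v,'t) iblt) itree
    \<Rightarrow> ('n, ('k::ab_group_add,'v::ab_group_add,'t::ab_group_add) triple, ('k,'v,'t) iblt) itree
    \<Rightarrow> ('n, ('k,'v,'t) triple, ('k,'v,'t) iblt) itree \<times> nat" where
  "recompute h \<delta> old (Leaf n es I) =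
     (if changed old (Leaf n es I)
      then (let (J, k) = iblt_build h \<delta> es in (Leaf n es J, k))
      else (Leaf n es I, 0))"
| "recompute h \<delta> old (Node n cs e I) =
     (if changed old (Node n cs e I)
      then (let rs = map (recompute h \<delta> old) cs;
                cs' = map fst rs;
                k1 = sum_list (map snd rs);
                (J, k2) = iblt_combines (map annot cs') (iblt_empty \<delta>);
                (J', k3) = iblt_insert h e J
            in (Node n cs' e J', k1 + k2 + k3))
      else (Node n cs e I, 0))"

definition insert_iblt_tree ::
  "(('n,('k,'v,'t) triple,('k,'v,'t) iblt) itree \<Rightarrow> ('k,'v,'t) triple \<Rightarrow> ('n,('k,'v,'t) triple,('k,'v,'t) iblt) itree)
   \<Rightarrow> (('n,('k,'v,'t) triple,('k,'v,'t) iblt) itree \<Rightarrow> ('k,'v,'t) triple \<Rightarrow> nat)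
   \<Rightarrow> ('k \<Rightarrow> nat list) \<Rightarrow> nat
   \<Rightarrow> ('n,('k::ab_group_add,'v::ab_group_add,'t::ab_group_add) triple,('k,'v,'t) iblt) itree \<Rightarrow> ('k,'v,'t) triple
   \<Rightarrow> ('n,('k,'v,'t) triple,('k,'v,'t) iblt) itree \<times> nat" where
  "insert_iblt_tree ins T h \<delta> S x =
     (let S' = ins S x; (R, k) = recompute h \<delta> S S' in (R, T S x + k))"

end

theory Submission
  imports Defs
begin

lemma inserts_cost: "snd (iblt_inserts h xs (B, c)) = c + length xs"
proof (induction xs arbitrary: B c)
  case Nil then show ?case by simp
next
  case (Cons x xs)
  have "iblt_inserts h (x # xs) (B, c) = iblt_inserts h xs (fst (iblt_insert h x B), c + 1)"
    by (simp add: iblt_insert_def)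
  then show ?case using Cons.IH by simp
qed

lemma combines_cost:
  "snd (iblt_combines As (B, c)) \<le> c + length As * length B \<and> length (fst (iblt_combines As (B, c))) \<le> length B"
proof (induction As arbitrary: B c)
  case Nil then show ?case by simp
next
  case (Cons A As)
  define B' where "B' = map2 add3 B A"
  have eq: "iblt_combines (A # As) (B, c) = iblt_combines As (B', c + length B)"
    by (simp add: iblt_combine_def B'_def)
  have P1: "snd (iblt_combines As (B', c + length B)) \<le> c + length B + length As * length B'"
    and P2: "length (fst (iblt_combines As (B', c + length B))) \<le> length B'"
    using Cons.IH[of B' "c + length B"] by auto
  have l: "length B' \<le> length B" by (simp add: B'_def)
  have m: "length As * length B' \<le> length As * length B" using l by (rule mult_le_mono2)
  have ll: "length (A # As) * length B = length B + length As * length B" by simp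
  show ?case unfolding eq ll using P1 P2 l m by linarith
qed

lemma rec_cost:
  fixes old :: "('n, ('k::ab_group_add,'v::ab_group_add,'t::ab_group_add) triple, ('k,'v,'t) iblt) itree"
  assumes "1 \<le> \<delta>" "1 \<le> \<beta>" "1 \<le> c"
    "\<forall>s \<in> set (nodes t). \<forall>n es I. s = Leaf n es I \<longrightarrow> length es \<le> B * \<beta>"
    "\<forall>s \<in> set (nodes t). \<forall>n cs e I. s = Node n cs e I \<longrightarrow> length cs = c"
  shows "snd (recompute h \<delta> old t) \<le> (B + 3) * (length (filter (\<lambda>s. is_leaf s \<and> changed old s) (nodes t)) * \<beta>
      + length (filter (\<lambda>s. \<not> is_leaf s \<and> changed old s) (nodes t)) * c * \<delta>)"
  using assms(4,5)
proof (induction t)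
  case (Leaf n es I)
  have "length es \<le> B * \<beta>" using Leaf by simp
  moreover have "1 \<le> 3 * \<beta>" using assms(2) by simp
  ultimately have "1 + length es \<le> B * \<beta> + 3 * \<beta>" by linarith
  then have "1 + length es \<le> (B+3) * \<beta>" by (simp only: add_mult_distrib)
  then show ?case
    using inserts_cost[of h es "replicate \<delta> (0,0,0)" 1]
    by (auto simp: iblt_build_def iblt_empty_def split: prod.splits)
next
  case (Node n cs e I)
  let ?L = "\<lambda>t. length (filter (\<lambda>s. is_leaf s \<and> changed old s) (nodes t))"
  let ?I = "\<lambda>t. length (filter (\<lambda>s. \<not> is_leaf s \<and> changed old s) (nodes t))"
  show ?case
  proof (cases "changed old (Node n cs e I)")
    case False then show ?thesis by simp
  next
    case True
    have lc: "length cs = c" using Node.prems(2) by (metis list.set_intros(1) nodes.simps(2))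
    have ch: "snd (recompute h \<delta> old ci) \<le> (B+3) * (?L ci * \<beta> + ?I ci * c * \<delta>)" if "ci \<in> set cs" for ci
      using Node.IH[OF that] Node.prems that by auto
    have k1: "sum_list (map (\<lambda>ci. snd (recompute h \<delta> old ci)) cs)
        \<le> sum_list (map (\<lambda>ci. (B+3) * (?L ci * \<beta> + ?I ci * c * \<delta>)) cs)"
      by (rule sum_list_mono) (use ch in auto)
    also have "\<dots> = (B+3) * (sum_list (map ?L cs) * \<beta> + sum_list (map ?I cs) * c * \<delta>)"
      by (simp add: sum_list_const_mult sum_list_mult_const sum_list_addf algebra_simps)
    finally have k1': "sum_list (map (\<lambda>ci. snd (recompute h \<delta> old ci)) cs)
        \<le> (B+3) * (sum_list (map ?L cs) * \<beta> + sum_list (map ?I cs) * c * \<delta>)" .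
    obtain J k2 where J: "iblt_combines (map (annot \<circ> fst \<circ> recompute h \<delta> old) cs) (iblt_empty \<delta>) = (J, k2)"
      by fastforce
    have k2: "k2 \<le> 1 + c * \<delta>"
      using combines_cost[of "map (annot \<circ> fst \<circ> recompute h \<delta> old) cs" "replicate \<delta> (0,0,0)" 1] J lc
      by (simp add: iblt_empty_def)
    have lL: "?L (Node n cs e I) = sum_list (map ?L cs)"
      by (simp add: length_concat filter_concat comp_def)
    have lI: "?I (Node n cs e I) = 1 + sum_list (map ?I cs)"
      using True by (simp add: length_concat filter_concat comp_def)
    have cd: "1 \<le> c * \<delta>" using assms by simp
    have "snd (recompute h \<delta> old (Node n cs e I)) = sum_list (map (\<lambda>ci. snd (recompute h \<delta> old ci)) cs) + k2 + 1"
      using True J by (simp add: iblt_insert_def comp_def split: prod.splits)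
    also have "\<dots> \<le> (B+3) * (sum_list (map ?L cs) * \<beta> + sum_list (map ?I cs) * c * \<delta>) + (B+3) * (c * \<delta>)"
    proof -
      have "k2 + 1 \<le> 3 * (c * \<delta>)" using k2 cd by linarith
      also have "\<dots> \<le> (B+3) * (c * \<delta>)" by (intro mult_le_mono1) simp
      finally show ?thesis using k1' by linarith
    qed
    also have "\<dots> = (B+3) * (?L (Node n cs e I) * \<beta> + ?I (Node n cs e I) * c * \<delta>)"
    proof -
      have g: "(B+3) * (a * \<beta> + b * c * \<delta>) + (B+3) * (c * \<delta>) = (B+3) * (a * \<beta> + (1 + b) * c * \<delta>)"
        for a b :: nat by (simp add: algebra_simps)
      show ?thesis unfolding lL lI by (rule g)
    qed
    finally show ?thesis .
  qed
qed

theorem lemma9: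
  "\<forall>B::nat. \<exists>K::nat. \<forall>ins T h (\<delta>::nat) (\<beta>::nat) (c::nat)
       (S :: ('n,('k::ab_group_add,'v::ab_group_add,'t::ab_group_add) triple,('k,'v,'t) iblt) itree) x.
     1 \<le> \<delta> \<longrightarrow> 1 \<le> \<beta> \<longrightarrow> 1 \<le> c \<longrightarrow>
     (\<forall>s \<in> set (nodes (ins S x)). \<forall>n es I. s = Leaf n es I \<longrightarrow> length es \<le> B * \<beta>) \<longrightarrow>
     (\<forall>s \<in> set (nodes (ins S x)). \<forall>n cs e I. s = Node n cs e I \<longrightarrow> length cs = c) \<longrightarrow>
     snd (insert_iblt_tree ins T h \<delta> S x)
       \<le> K * (T S x + delta_L S (ins S x) * \<beta> + delta_I S (ins S x) * c * \<delta>)"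
  apply (rule allI)
  subgoal for B
    apply (rule exI[of _ "B + 3"])
    apply (intro allI impI)
    subgoal premises a for ins T h \<delta> \<beta> c S x
    proof -
      have r: "snd (recompute h \<delta> S (ins S x)) \<le> (B+3) * (delta_L S (ins S x) * \<beta> + delta_I S (ins S x) * c * \<delta>)"
        using rec_cost[OF a] unfolding delta_L_def delta_I_def by blast
      have e: "snd (insert_iblt_tree ins T h \<delta> S x) = T S x + snd (recompute h \<delta> S (ins S x))"
        by (simp add: insert_iblt_tree_def split: prod.splits)
      show ?thesis unfolding e using r by (simp add: algebra_simps)
    qed
    done
  done

end
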